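(* For the graph $G$ defined below and for every finite set $C$, there is no distinguishing $C$-colouring of the vertex set of $G$.
   Context: Let $\mathbb Q^+=\{q^+: q\in\mathbb Q\}$ and $\mathbb Q^-=\{q^-: q\in\mathbb Q\}$ be two disjoint copies of $\mathbb Q$. $G$ is the simple undirected graph with vertex set $V=\mathbb Q^+\cup\mathbb Q^-$ in which the edges are exactly the pairs $\{q^+,r^-\}$ with $q,r\in\mathbb Q$ and $q<r$ (there are no edges inside $\mathbb Q^+$ or inside $\mathbb Q^-$). A $C$-colouring of $V$ is a map $c\colon V\to C$; it is distinguishing if the only automorphism $\varphi$ of $G$ with $c(\varphi(v))=c(v)$ for all $v\in V$ is the identity. *)

theory Defs
  imports Main "HOL.Rat"
begin

text \<open>Vertices: (q, True) stands for q^+, (q, False) stands for q^-.\<close>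
type_synonym vertex = "rat \<times> bool"

definition G_edge :: "vertex \<Rightarrow> vertex \<Rightarrow> bool" where
  "G_edge u v \<longleftrightarrow>
     (\<exists>q r. q < r \<and> ((u = (q, True) \<and> v = (r, False)) \<or> (u = (r, False) \<and> v = (q, True))))"

definition G_aut :: "(vertex \<Rightarrow> vertex) \<Rightarrow> bool" where
  "G_aut \<phi> \<longleftrightarrow> bij \<phi> \<and> (\<forall>u v. G_edge (\<phi> u) (\<phi> v) \<longleftrightarrow> G_edge u v)"

definition distinguishing :: "(vertex \<Rightarrow> 'c) \<Rightarrow> bool" where
  "distinguishing c \<longleftrightarrow> (\<forall>\<phi>. G_aut \<phi> \<and> (\<forall>v. c (\<phi> v) = c v) \<longrightarrow> \<phi> = id)"

end

theory Submission
  imports Defs "HOL-Library.Countable"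
begin

locale bf =
  fixes a b :: rat and c :: "rat \<Rightarrow> 'k"
  assumes dens: "\<And>x u v. x \<in> {a<..<b} \<Longrightarrow> a \<le> u \<Longrightarrow> u < v \<Longrightarrow> v \<le> b \<Longrightarrow> \<exists>w. u<w \<and> w<v \<and> c w = c x"
begin

definition good :: "(rat\<times>rat) set \<Rightarrow> bool" where
 "good P \<longleftrightarrow> finite P \<and> P \<subseteq> {a<..<b} \<times> {a<..<b} \<and>
   (\<forall>x y x' y'. (x,y)\<in>P \<longrightarrow> (x',y')\<in>P \<longrightarrow> (x<x' \<longleftrightarrow> y<y') \<and> c x = c y)"

lemma goodD: "good P \<Longrightarrow> (x,y)\<in>P \<Longrightarrow> (x',y')\<in>P \<Longrightarrow> (x<x' \<longleftrightarrow> y<y') \<and> c x = c y"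
  unfolding good_def by simp

lemma goodS: "good P \<Longrightarrow> P \<subseteq> {a<..<b} \<times> {a<..<b}"
  unfolding good_def by simp

lemma good_conv: "good P \<Longrightarrow> good (P\<inverse>)"
  unfolding good_def by auto

lemma ext: assumes g: "good P" and xA: "x \<in> {a<..<b}"
  shows "\<exists>y. good (insert (x,y) P)"
proof (cases "\<exists>y. (x,y)\<in>P")
  case True then obtain y where "(x,y) \<in> P" by blast
  then have "insert (x,y) P = P" by (rule insert_absorb)
  then show ?thesis using g by metis
next
  case False
  have gg: "finite P" "P \<subseteq> {a<..<b} \<times> {a<..<b}"
    "\<forall>x y x' y'. (x,y)\<in>P \<longrightarrow> (x',y')\<in>P \<longrightarrow> (x<x' \<longleftrightarrow> y<y') \<and> c x = c y"
    using g unfolding good_def by simp_all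
  have fin: "finite P" and sub: "P \<subseteq> {a<..<b} \<times> {a<..<b}" using gg by simp_all
  have ord: "(x<x' \<longleftrightarrow> y<y')" if "(x,y)\<in>P" "(x',y')\<in>P" for x y x' y'
    using gg(3) that by simp
  have col: "c x = c y" if "(x,y)\<in>P" for x y
    using gg(3) that by simp
  define L where "L = {y'. \<exists>x'. (x',y')\<in>P \<and> x'<x}"
  define U where "U = {y'. \<exists>x'. (x',y')\<in>P \<and> x<x'}"
  have Lf: "finite L" unfolding L_def
    by (rule finite_subset[OF _ finite_imageI[OF fin, of snd]]) force
  have Uf: "finite U" unfolding U_def
    by (rule finite_subset[OF _ finite_imageI[OF fin, of snd]]) force
  define lo where "lo = (if L = {} then a else Max L)"
  define hi where "hi = (if U = {} then b else Min U)"
  have LA: "\<And>y. y \<in> L \<Longrightarrow> a < y \<and> y < b" unfolding L_def using sub by auto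
  have UA: "\<And>y. y \<in> U \<Longrightarrow> a < y \<and> y < b" unfolding U_def using sub by auto
  have LU: "y < y'" if ly: "y \<in> L" and uy: "y' \<in> U" for y y'
  proof -
    obtain x1 where h1: "(x1,y)\<in>P" "x1<x" using ly unfolding L_def by blast
    obtain x2 where h2: "(x2,y')\<in>P" "x<x2" using uy unfolding U_def by blast
    have "x1 < x2" using h1 h2 by simp
    then show ?thesis using ord[OF h1(1) h2(1)] by blast
  qed
  have alo: "a \<le> lo"
  proof (cases "L = {}")
    case True then show ?thesis by (simp add: lo_def)
  next
    case False then have "Max L \<in> L" using Lf Max_in by blast
    then show ?thesis using LA False by (simp add: lo_def less_imp_le)
  qed
  have hib: "hi \<le> b"
  proof (cases "U = {}")
    case True then show ?thesis by (simp add: hi_def)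
  next
    case False then have "Min U \<in> U" using Uf Min_in by blast
    then show ?thesis using UA False by (simp add: hi_def less_imp_le)
  qed
  have lohi: "lo < hi"
  proof -
    consider "L = {}" "U = {}" | "L = {}" "U \<noteq> {}" | "L \<noteq> {}" "U = {}" | "L \<noteq> {}" "U \<noteq> {}" by blast
    then show ?thesis
    proof cases
      case 1 then show ?thesis using xA by (simp add: lo_def hi_def)
    next
      case 2 then show ?thesis using UA[OF Min_in[OF Uf]] by (simp add: lo_def hi_def)
    next
      case 3 then show ?thesis using LA[OF Max_in[OF Lf]] by (simp add: lo_def hi_def)
    next
      case 4 then show ?thesis using LU[OF Max_in[OF Lf] Min_in[OF Uf]] by (simp add: lo_def hi_def)
    qed
  qed
  obtain y where y: "lo < y" "y < hi" "c y = c x" using dens[OF xA alo lohi hib] by blast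
  have yA: "y \<in> {a<..<b}" using y alo hib by auto
  have Lle: "\<And>y'. y' \<in> L \<Longrightarrow> y' \<le> lo" unfolding lo_def using Lf by auto
  have Uge: "\<And>y'. y' \<in> U \<Longrightarrow> hi \<le> y'" unfolding hi_def using Uf by auto
  have new: "(x<x' \<longleftrightarrow> y<y') \<and> (x'<x \<longleftrightarrow> y'<y)" if "(x',y')\<in>P" for x' y'
  proof -
    have "x' \<noteq> x" using False that by blast
    then consider "x' < x" | "x < x'" by linarith
    then show ?thesis
    proof cases
      case 1 then have "y' \<in> L" unfolding L_def using that by blast
      then show ?thesis using Lle y 1 by fastforce
    next
      case 2 then have "y' \<in> U" unfolding U_def using that by blast
      then show ?thesis using Uge y 2 by fastforce
    qed
  qed
  have pw: "(x1<x2 \<longleftrightarrow> y1<y2) \<and> c x1 = c y1"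
    if h1: "(x1,y1)\<in>insert (x,y) P" and h2: "(x2,y2)\<in>insert (x,y) P" for x1 y1 x2 y2
  proof -
    from h1 have A1: "(x1,y1) = (x,y) \<or> (x1,y1) \<in> P" by blast
    from h2 have A2: "(x2,y2) = (x,y) \<or> (x2,y2) \<in> P" by blast
    show ?thesis
    proof (cases "(x1,y1) = (x,y)")
      case T1: True
      show ?thesis
      proof (cases "(x2,y2) = (x,y)")
        case True then show ?thesis using T1 y(3) by simp
      next
        case False then have "(x2,y2) \<in> P" using A2 by blast
        then show ?thesis using new[of x2 y2] T1 y(3) by simp
      qed
    next
      case F1: False
      then have P1: "(x1,y1) \<in> P" using A1 by blast
      show ?thesis
      proof (cases "(x2,y2) = (x,y)")
        case True then show ?thesis using new[OF P1] col[OF P1] by simp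
      next
        case False then have "(x2,y2) \<in> P" using A2 by blast
        then show ?thesis using ord[OF P1] col[OF P1] by blast
      qed
    qed
  qed
  have "good (insert (x,y) P)"
    unfolding good_def using fin sub xA yA pw by blast
  then show ?thesis by blast
qed

definition ext_d where
  "ext_d P x = (if x \<in> {a<..<b} then insert (x, SOME y. good (insert (x,y) P)) P else P)"

lemma ext_d: assumes "good P"
  shows "good (ext_d P x)" "P \<subseteq> ext_d P x" "x \<in> {a<..<b} \<Longrightarrow> \<exists>y. (x,y) \<in> ext_d P x"
proof -
  show "good (ext_d P x)"
  proof (cases "x \<in> {a<..<b}")
    case True
    have "good (insert (x, SOME y. good (insert (x,y) P)) P)" by (rule someI_ex[OF ext[OF assms True]])
    then show ?thesis using True by (simp add: ext_d_def)
  next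
    case False then have "ext_d P x = P" unfolding ext_d_def by (rule if_not_P)
    then show ?thesis using assms by simp
  qed
  show "P \<subseteq> ext_d P x" unfolding ext_d_def by auto
  show "x \<in> {a<..<b} \<Longrightarrow> \<exists>y. (x,y) \<in> ext_d P x" unfolding ext_d_def by auto
qed

definition ext_r where "ext_r P y = (ext_d (P\<inverse>) y)\<inverse>"

lemma ext_r: assumes "good P"
  shows "good (ext_r P x)" "P \<subseteq> ext_r P x" "x \<in> {a<..<b} \<Longrightarrow> \<exists>y. (y,x) \<in> ext_r P x"
proof -
  have g: "good (P\<inverse>)" using good_conv assms by blast
  show "good (ext_r P x)" unfolding ext_r_def using good_conv ext_d(1)[OF g] by blast
  show "P \<subseteq> ext_r P x" unfolding ext_r_def using ext_d(2)[OF g] by auto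
  show "x \<in> {a<..<b} \<Longrightarrow> \<exists>y. (y,x) \<in> ext_r P x" unfolding ext_r_def using ext_d(3)[OF g] by auto
qed

primrec S :: "rat \<Rightarrow> rat \<Rightarrow> nat \<Rightarrow> (rat\<times>rat) set" where
  "S p q 0 = {(p,q)}"
| "S p q (Suc n) = ext_r (ext_d (S p q n) (from_nat n)) (from_nat n)"

lemma main:
  assumes pA: "p \<in> {a<..<b}" and qA: "q \<in> {a<..<b}" and cpq: "c p = c q"
  shows "\<exists>F. strict_mono F \<and> surj F \<and> F p = q \<and> (\<forall>x. c (F x) = c x)"
proof -
  have g: "good (S p q n)" for n
  proof (induction n)
    case 0 show ?case using pA qA cpq unfolding good_def by simp
  next
    case (Suc n) then show ?case by (simp add: ext_r(1) ext_d(1))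
  qed
  have inc: "S p q n \<subseteq> S p q (Suc n)" for n
  proof -
    have "S p q n \<subseteq> ext_d (S p q n) (from_nat n)" by (rule ext_d(2)[OF g])
    also have "\<dots> \<subseteq> ext_r (ext_d (S p q n) (from_nat n)) (from_nat n)" by (rule ext_r(2)[OF ext_d(1)[OF g]])
    finally show ?thesis by simp
  qed
  have mono: "m \<le> n \<Longrightarrow> S p q m \<subseteq> S p q n" for m n
    using lift_Suc_mono_le[of "S p q", OF inc] by blast
  define R where "R = (\<Union>n. S p q n)"
  have RA: "R \<subseteq> {a<..<b} \<times> {a<..<b}" unfolding R_def using goodS[OF g] by blast
  have Rord: "(x<x' \<longleftrightarrow> y<y') \<and> c x = c y" if h: "(x,y)\<in>R" "(x',y')\<in>R" for x y x' y'
  proof -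
    obtain m n where "(x,y) \<in> S p q m" "(x',y') \<in> S p q n" using h unfolding R_def by blast
    then have "(x,y) \<in> S p q (max m n)" "(x',y') \<in> S p q (max m n)"
      using mono[of m "max m n"] mono[of n "max m n"] by auto
    then show ?thesis using goodD[OF g[of "max m n"]] by blast
  qed
  have Runiq: "(x,y)\<in>R \<Longrightarrow> (x,y')\<in>R \<Longrightarrow> y = y'" for x y y'
    using Rord[of x y x y'] Rord[of x y' x y] by auto
  have Rdom: "\<exists>y. (x,y)\<in>R" if h: "x \<in> {a<..<b}" for x
  proof -
    obtain n where n: "from_nat n = x" by (metis from_nat_to_nat)
    obtain y where "(x,y) \<in> ext_d (S p q n) (from_nat n)" using ext_d(3)[OF g] n h by blast
    then have "(x,y) \<in> S p q (Suc n)" using ext_r(2)[OF ext_d(1)[OF g]] by auto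
    then show ?thesis unfolding R_def by blast
  qed
  have Rran: "\<exists>x. (x,y)\<in>R" if h: "y \<in> {a<..<b}" for y
  proof -
    obtain n where n: "from_nat n = y" by (metis from_nat_to_nat)
    obtain x where "(x,y) \<in> S p q (Suc n)" using ext_r(3)[OF ext_d(1)[OF g]] n h by fastforce
    then show ?thesis unfolding R_def by blast
  qed
  define F where "F x = (if x \<in> {a<..<b} then (SOME y. (x,y)\<in>R) else x)" for x
  have FR: "x \<in> {a<..<b} \<Longrightarrow> (x, F x) \<in> R" for x
    unfolding F_def using someI_ex[OF Rdom] by simp
  have FA: "x \<in> {a<..<b} \<Longrightarrow> F x \<in> {a<..<b}" for x using FR RA by blast
  have sm: "strict_mono F"
  proof (rule strict_monoI)
    fix x y :: rat assume xy: "x < y"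
    show "F x < F y"
    proof (cases "x \<in> {a<..<b}")
      case xa: True
      show ?thesis
      proof (cases "y \<in> {a<..<b}")
        case True then show ?thesis using Rord[OF FR[OF xa] FR[OF True]] xy by blast
      next
        case False then have "b \<le> y" using xa xy by auto
        then show ?thesis using FA[OF xa] False by (auto simp: F_def)
      qed
    next
      case xn: False
      show ?thesis
      proof (cases "y \<in> {a<..<b}")
        case True then have "x \<le> a" using xn xy by auto
        then show ?thesis using FA[OF True] xn by (auto simp: F_def)
      next
        case False then show ?thesis using xn xy by (auto simp: F_def)
      qed
    qed
  qed
  have su: "surj F"
  proof -
    have "y \<in> range F" for y
    proof (cases "y \<in> {a<..<b}")
      case True
      then obtain x where x: "(x,y)\<in>R" using Rran by blast
      then have "x \<in> {a<..<b}" using RA by blast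
      then have "F x = y" using Runiq[OF FR x] by simp
      then show ?thesis by blast
    next
      case False then show ?thesis by (metis F_def rangeI)
    qed
    then show ?thesis by blast
  qed
  have pq: "(p,q) \<in> R" unfolding R_def by (metis S.simps(1) UN_iff UNIV_I singletonI)
  have Fp: "F p = q" using Runiq[OF FR[OF pA] pq] .
  have col: "c (F x) = c x" for x
    using Rord[OF FR FR, of x x] by (cases "x \<in> {a<..<b}") (auto simp: F_def)
  show ?thesis using sm su Fp col by blast
qed

end

lemma find_dense:
  fixes c :: "rat \<Rightarrow> 'k"
  shows "finite (c ` {a<..<b}) \<Longrightarrow> a < b \<Longrightarrow> \<exists>a' b'. a \<le> a' \<and> a' < b' \<and> b' \<le> b \<and>
     (\<forall>x u v. x\<in>{a'<..<b'} \<longrightarrow> a' \<le> u \<longrightarrow> u<v \<longrightarrow> v \<le> b' \<longrightarrow> (\<exists>w. u<w \<and> w<v \<and> c w = c x))"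
proof (induction "card (c ` {a<..<b})" arbitrary: a b rule: less_induct)
  case less
  show ?case
  proof (cases "\<forall>x u v. x\<in>{a<..<b} \<longrightarrow> a \<le> u \<longrightarrow> u<v \<longrightarrow> v \<le> b \<longrightarrow> (\<exists>w. u<w \<and> w<v \<and> c w = c x)")
    case True
    have "a \<le> a" "b \<le> b" by simp_all
    then show ?thesis using True less.prems(2) by blast
  next
    case False
    then obtain x u v where x: "x \<in> {a<..<b}" "a \<le> u" "u < v" "v \<le> b"
      and no: "\<And>w. u<w \<Longrightarrow> w<v \<Longrightarrow> c w \<noteq> c x" by blast
    have subs: "c ` {u<..<v} \<subseteq> c ` {a<..<b} - {c x}" using x no by auto
    have cd: "card (c ` {u<..<v}) < card (c ` {a<..<b})"
    proof -
      have "c ` {u<..<v} \<subset> c ` {a<..<b}" using subs x(1) by blast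
      then show ?thesis by (rule psubset_card_mono[OF less.prems(1)])
    qed
    have fn: "finite (c ` {u<..<v})" using subs less.prems(1) finite_subset by blast
    obtain a' b' where ab': "u \<le> a'" "a' < b'" "b' \<le> v" and
      D: "\<forall>x u v. x\<in>{a'<..<b'} \<longrightarrow> a' \<le> u \<longrightarrow> u<v \<longrightarrow> v \<le> b' \<longrightarrow> (\<exists>w. u<w \<and> w<v \<and> c w = c x)"
      using less.hyps[OF cd fn x(3)] by blast
    have "a \<le> a'" "b' \<le> b" using x ab' by simp_all
    then show ?thesis using ab'(2) D by blast
  qed
qed

lemma G_edge_iff:
  "G_edge u v \<longleftrightarrow> (snd u \<and> \<not> snd v \<and> fst u < fst v) \<or> (\<not> snd u \<and> snd v \<and> fst v < fst u)"
  by (cases u; cases v) (auto simp: G_edge_def)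

theorem mainTheorem4:
  fixes C :: "'c set"
  assumes "finite C"
  shows "\<not> (\<exists>c :: vertex \<Rightarrow> 'c. (\<forall>v. c v \<in> C) \<and> distinguishing c)"
proof
  assume "\<exists>c :: vertex \<Rightarrow> 'c. (\<forall>v. c v \<in> C) \<and> distinguishing c"
  then obtain c :: "vertex \<Rightarrow> 'c" where cC: "\<forall>v. c v \<in> C" and dist: "distinguishing c" by blast
  define c' where "c' q = (c (q,True), c (q,False))" for q
  have "c' ` {0<..<1} \<subseteq> C \<times> C" using cC by (auto simp: c'_def)
  then have "finite (c' ` {0<..<1})" using assms finite_subset by blast
  then obtain a b where ab: "a < b" and
    dn: "\<forall>x u v. x\<in>{a<..<b} \<longrightarrow> a \<le> u \<longrightarrow> u<v \<longrightarrow> v \<le> b \<longrightarrow> (\<exists>w. u<w \<and> w<v \<and> c' w = c' x)"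
    using find_dense[of c' 0 1] by auto
  interpret bf a b c' using dn by unfold_locales blast
  define p where "p = (a+b)/2"
  have pA: "p \<in> {a<..<b}" using ab by (auto simp: p_def)
  then obtain q where q: "p < q" "q < b" "c' q = c' p" using dn ab by (meson greaterThanLessThan_iff less_le order_refl)
  have qA: "q \<in> {a<..<b}" using q pA by auto
  obtain F where F: "strict_mono F" "surj F" "F p = q" "\<forall>x. c' (F x) = c' x"
    using main[OF pA qA q(3)[symmetric]] by blast
  define \<phi> where "\<phi> v = (F (fst v), snd v)" for v :: vertex
  have inj: "inj \<phi>" unfolding \<phi>_def inj_def using strict_mono_eq[OF F(1)] by auto
  have sj: "surj \<phi>"
  proof -
    have "v \<in> range \<phi>" for v
    proof -
      obtain x where "F x = fst v" using F(2) by (metis surjD)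
      then have "\<phi> (x, snd v) = v" by (simp add: \<phi>_def)
      then show ?thesis by (metis rangeI)
    qed
    then show ?thesis by blast
  qed
  have aut: "G_aut \<phi>"
    unfolding G_aut_def bij_def using inj sj strict_mono_less[OF F(1)]
    by (simp add: G_edge_iff \<phi>_def)
  have colp: "c (\<phi> v) = c v" for v
  proof (cases v)
    case (Pair x s)
    then show ?thesis using F(4) by (cases s) (auto simp: \<phi>_def c'_def)
  qed
  have "\<phi> = id" using dist aut colp unfolding distinguishing_def by blast
  moreover have "\<phi> (p,True) \<noteq> (p,True)" using F(3) q(1) by (simp add: \<phi>_def)
  ultimately show False by simp
qed

end
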